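(* Let $q\in(0,1]$. Then $\mathrm{Kaz}(\rho,R(SO_q(3)))=1-\frac{3}{[3]_q}=1-\frac{3}{q^2+q^{-2}+1}$.
   Context: $R(SO_q(3))$ is the fusion algebra with irreducible objects $I=\mathbb{Z}_+$, unit $0$, trivial involution, product $m\cdot n=\sum_{k=|m-n|}^{m+n}k=\sum_kN^k_{m,n}k$, and dimension $d(n)=[2n+1]_q$, where $[x]_q=\frac{q^{-x}-q^x}{q^{-1}-q}$ for $0<q<1$ and $[x]_1=x$. Let $\mathcal{C}_R=\mathbb{C}[I]$ be the complexification; the right regular representation $\rho:\mathcal{C}_R\to B(\ell^2(I))$ is $\rho(m)\delta_n=\sum_kN^k_{n,\bar m}\delta_k$. A finite generating set is a finite $X\subseteq I$ such that every element of $I$ appears with nonzero coefficient in some product of elements of $X$. For a unital $*$-representation $\pi$ and finite generating $X$, $\mathrm{Kaz}(X,\pi,R)=\inf_{\|\xi\|=1}\max_{m\in X}\frac{\|\pi(m)\xi-d(m)\xi\|}{d(m)}$ and $\mathrm{Kaz}(\pi,R)=\inf_X\mathrm{Kaz}(X,\pi,R)$ over finite generating sets. *)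

theory Defs
  imports "HOL-Analysis.Analysis"
begin

text \<open>The fusion algebra R(SO_q(3)): irreducibles are the naturals, unit 0,
  trivial involution, fusion rules N^k_{m,n} = 1 iff |m-n| <= k <= m+n.\<close>

definition fusion_N :: "nat \<Rightarrow> nat \<Rightarrow> nat \<Rightarrow> nat" where
  "fusion_N k m n = (if nat \<bar>int m - int n\<bar> \<le> k \<and> k \<le> m + n then 1 else 0)"

definition qnum :: "real \<Rightarrow> real \<Rightarrow> real" where
  "qnum q x = (if q = 1 then x else (q powr (-x) - q powr x) / (inverse q - q))"

definition dimq :: "real \<Rightarrow> nat \<Rightarrow> real" where
  "dimq q n = qnum q (2 * real n + 1)"

text \<open>Coefficient of the irreducible k in the product m_1 \<cdot> ... \<cdot> m_r
  of the word [m_1,...,m_r] (empty product = unit 0).\<close>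
fun word_coeff :: "nat list \<Rightarrow> nat \<Rightarrow> nat" where
  "word_coeff [] k = (if k = 0 then 1 else 0)"
| "word_coeff (m # w) k = (\<Sum>j\<le>k + m. fusion_N k m j * word_coeff w j)"

definition finite_generating :: "nat set \<Rightarrow> bool" where
  "finite_generating X \<longleftrightarrow> finite X \<and>
     (\<forall>k. \<exists>w. set w \<subseteq> X \<and> word_coeff w k \<noteq> 0)"

definition l2 :: "(nat \<Rightarrow> complex) set" where
  "l2 = {\<xi>. summable (\<lambda>n. (cmod (\<xi> n))\<^sup>2)}"

definition l2norm :: "(nat \<Rightarrow> complex) \<Rightarrow> real" where
  "l2norm \<xi> = sqrt (\<Sum>n. (cmod (\<xi> n))\<^sup>2)"

text \<open>Right regular representation: rho(m) delta_n = sum_k N^k_{n, bar m} delta_k,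
  with bar m = m. Hence (rho(m) xi)(k) = sum_n N^k_{n,m} xi(n); only n <= k+m contribute.\<close>
definition rho :: "nat \<Rightarrow> (nat \<Rightarrow> complex) \<Rightarrow> (nat \<Rightarrow> complex)" where
  "rho m \<xi> = (\<lambda>k. \<Sum>n\<le>k + m. of_nat (fusion_N k n m) * \<xi> n)"

definition Kaz_X :: "real \<Rightarrow> nat set \<Rightarrow> real" where
  "Kaz_X q X = (INF \<xi>\<in>{\<xi>\<in>l2. l2norm \<xi> = 1}.
      Max ((\<lambda>m. l2norm (\<lambda>k. rho m \<xi> k - of_real (dimq q m) * \<xi> k) / dimq q m) ` X))"

definition Kaz_rho :: "real \<Rightarrow> real" where
  "Kaz_rho q = (INF X\<in>{X. finite_generating X}. Kaz_X q X)"

end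

theory Submission
  imports Defs
begin


lemma dimq_ne1:
  assumes "0 < q" "q \<noteq> 1"
  shows "dimq q n = (inverse q ^ (2*n+1) - q ^ (2*n+1)) / (inverse q - q)"
proof -
  have e: "2 * real n + 1 = real (2*n+1)" by simp
  have h1: "q powr (- (2 * real n + 1)) = inverse q ^ (2*n+1)"
    using assms by (simp only: powr_minus e powr_realpow power_inverse)
  have h2: "q powr (2 * real n + 1) = q ^ (2*n+1)"
    using assms by (simp only: e powr_realpow)
  show ?thesis unfolding dimq_def qnum_def by (simp only: if_not_P[OF assms(2)] h1 h2)
qed

lemma inv_ne:
  fixes q :: real assumes "0 < q" "q \<noteq> 1" shows "inverse q - q \<noteq> 0"
proof
  assume "inverse q - q = 0"
  then have "q * q = 1" using assms by (simp add: field_simps)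
  then have "(q - 1) * (q + 1) = 0" by (simp add: algebra_simps)
  then show False using assms by simp
qed

lemma dimq_0: "0 < q \<Longrightarrow> dimq q 0 = 1"
proof (cases "q = 1")
  case True then show ?thesis by (simp add: dimq_def qnum_def)
next
  case False
  assume q: "0 < q"
  show ?thesis using dimq_ne1[OF q False, of 0] inv_ne[OF q False] by simp
qed

lemma dimq_Suc:
  assumes "0 < q"
  shows "dimq q (Suc n) = dimq q n + q ^ (2*n+2) + inverse q ^ (2*n+2)"
proof (cases "q = 1")
  case True then show ?thesis by (simp add: dimq_def qnum_def)
next
  case False
  define x where "x = inverse q"
  have xq: "x * q = 1" using assms by (simp add: x_def)
  have ne: "x - q \<noteq> 0"
  proof
    assume "x - q = 0" then have "q * q = 1" using xq by simp
    then have "(q - 1) * (q + 1) = 0" by (simp add: algebra_simps)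
    then have "q = 1" using assms by simp
    then show False using False by simp
  qed
  have key: "x ^ (2*n+3) - q ^ (2*n+3) = (x ^ (2*n+1) - q ^ (2*n+1)) + (q ^ (2*n+2) + x ^ (2*n+2)) * (x - q)"
  proof -
    have a: "q ^ (2*n+2) * x = q ^ (2*n+1)" using xq by (simp add: algebra_simps)
    have b: "x ^ (2*n+2) * q = x ^ (2*n+1)" using xq by (simp add: algebra_simps)
    have gen: "\<And>A B::real. (A+B)*(x-q) = A*x - A*q + B*x - B*q" by (simp add: algebra_simps)
    have p1: "q ^ (2*n+2) * q = q ^ (2*n+3)" by (simp add: power_add power3_eq_cube power2_eq_square)
    have p2: "x ^ (2*n+2) * x = x ^ (2*n+3)" by (simp add: power_add power3_eq_cube power2_eq_square)
    show ?thesis using gen[of "q ^ (2*n+2)" "x ^ (2*n+2)"] a b p1 p2 by linarith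
  qed
  have e3: "2 * Suc n + 1 = 2*n+3" by simp
  have "dimq q (Suc n) = (x^(2*n+3) - q^(2*n+3))/(x-q)"
    using dimq_ne1[OF assms False, of "Suc n"] unfolding e3 x_def .
  also have "\<dots> = (x ^ (2*n+1) - q ^ (2*n+1))/(x-q) + (q ^ (2*n+2) + x ^ (2*n+2))"
    using ne by (simp only: key add_divide_distrib) simp
  also have "(x ^ (2*n+1) - q ^ (2*n+1))/(x-q) = dimq q n"
    using dimq_ne1[OF assms False, of n] unfolding x_def by (rule sym)
  finally show ?thesis by (simp add: x_def)
qed

lemma dimq_1: "0 < q \<Longrightarrow> dimq q 1 = 1 + q^2 + inverse q ^ 2"
  using dimq_Suc[of q 0] dimq_0[of q] by (simp add: power2_eq_square)

lemma s_mono: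
  fixes u :: real assumes "1 \<le> u"
  shows "u ^ j + inverse u ^ j \<le> u ^ (Suc j) + inverse u ^ (Suc j)"
proof -
  have eq: "u ^ (Suc j) + inverse u ^ (Suc j) - (u ^ j + inverse u ^ j) = (u - 1) * (u ^ j - inverse u ^ Suc j)"
    using assms by (simp add: algebra_simps field_simps)
  have i1: "inverse u ^ Suc j \<le> 1"
  proof -
    have "inverse u \<le> 1" "0 \<le> inverse u" using assms by (auto simp: inverse_le_1_iff)
    then show ?thesis by (rule power_le_one[rotated])
  qed
  have i2: "1 \<le> u ^ j" using assms by (simp add: one_le_power)
  have h1: "0 \<le> u - 1" using assms by simp
  have h2: "0 \<le> u ^ j - inverse u ^ Suc j" using i1 i2 by linarith
  have "0 \<le> (u - 1) * (u ^ j - inverse u ^ Suc j)" by (rule mult_nonneg_nonneg[OF h1 h2])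
  then show ?thesis using eq by linarith
qed

lemma s_ge:
  fixes u :: real assumes "1 \<le> u" "1 \<le> j"
  shows "u + inverse u \<le> u ^ j + inverse u ^ j"
  using assms(2)
proof (induction j rule: dec_induct)
  case base then show ?case by simp
next
  case (step j) then show ?case using s_mono[OF assms(1), of j] by simp
qed

lemma dimq_ge:
  assumes "0 < q" "q \<le> 1"
  shows "dimq q m \<ge> 1 + real m * (q^2 + inverse q ^ 2)"
proof (induction m)
  case 0 then show ?case using assms by (simp add: dimq_0)
next
  case (Suc m)
  define u where "u = inverse q ^ 2"
  have u1: "1 \<le> u" using assms unfolding u_def
    by (simp add: one_le_power one_le_inverse)
  have iu: "inverse u = q^2" unfolding u_def by (simp add: power_inverse)
  have "u + inverse u \<le> u ^ (Suc m) + inverse u ^ (Suc m)" using s_ge[OF u1, of "Suc m"] by simp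
  moreover have "u ^ Suc m = inverse q ^ (2*m+2)"
  proof -
    have "u ^ Suc m = inverse q ^ (2 * Suc m)" unfolding u_def by (simp only: power_mult)
    then show ?thesis by simp
  qed
  moreover have "inverse u ^ Suc m = q ^ (2*m+2)"
  proof -
    have "inverse u ^ Suc m = q ^ (2 * Suc m)" unfolding iu by (simp only: power_mult)
    then show ?thesis by simp
  qed
  ultimately have "q^2 + inverse q ^ 2 \<le> q ^ (2*m+2) + inverse q ^ (2*m+2)"
    using iu u_def by simp
  then show ?case using Suc dimq_Suc[OF assms(1), of m] by (simp add: algebra_simps)
qed

lemma dimq_ratio:
  assumes "0 < q" "q \<le> 1" "1 \<le> m"
  shows "1 - 3 / dimq q 1 \<le> 1 - real (2*m+1) / dimq q m"
proof -
  define s where "s = q^2 + inverse q ^ 2"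
  have s2: "s \<ge> 2"
  proof -
    have "0 \<le> (q - inverse q)^2" by simp
    then have "0 \<le> q^2 + inverse q^2 - 2 * (q * inverse q)" by (simp add: power2_diff)
    then show ?thesis using assms unfolding s_def by simp
  qed
  have D1: "dimq q 1 = 1 + s" using dimq_1[OF assms(1)] s_def by simp
  have Dm: "dimq q m \<ge> 1 + real m * s" using dimq_ge[OF assms(1,2)] s_def by simp
  have "0 \<le> real m * s" using s2 by simp
  then have pm: "dimq q m > 0" using Dm by linarith
  have "(real m - 1) * (s - 2) \<ge> 0" using assms s2 by simp
  then have "real (2*m+1) * (1 + s) \<le> 3 * dimq q m" using Dm by (simp add: algebra_simps)
  then have "real (2*m+1) / dimq q m \<le> 3 / (1 + s)" using pm s2
    by (simp add: field_simps)
  then show ?thesis using D1 by simp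
qed




lemma fusion_0: "fusion_N k 0 j = (if j = k then 1 else 0)"
  by (auto simp: fusion_N_def)

lemma word_coeff_zeros: "set w \<subseteq> {0} \<Longrightarrow> word_coeff w k = (if k = 0 then 1 else 0)"
proof (induction w arbitrary: k)
  case Nil then show ?case by simp
next
  case (Cons a w)
  then have a: "a = 0" and w: "set w \<subseteq> {0}" by auto
  have "word_coeff (a # w) k = (\<Sum>j\<le>k. (if j = k then 1 else 0) * word_coeff w j)"
    using a by (simp add: fusion_0)
  also have "(\<lambda>j. (if j = k then 1 else 0) * word_coeff w j) = (\<lambda>j. if j = k then word_coeff w j else 0)"
    by auto
  also have "(\<Sum>j\<le>k. (if j = k then word_coeff w j else 0)) = word_coeff w k"
    by (simp add: sum.delta)
  finally show ?case using Cons.IH[OF w] by simp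
qed

lemma gen_has_pos:
  assumes "finite_generating X" shows "\<exists>m\<in>X. 1 \<le> m"
proof (rule ccontr)
  assume "\<not> ?thesis"
  then have "X \<subseteq> {0}" by auto
  from assms obtain w where "set w \<subseteq> X" "word_coeff w 1 \<noteq> 0"
    unfolding finite_generating_def by blast
  then show False using word_coeff_zeros[of w 1] \<open>X \<subseteq> {0}\<close> by auto
qed

lemma word_coeff_rep: "word_coeff (replicate k 1) k > 0"
proof (induction k)
  case 0 then show ?case by simp
next
  case (Suc k)
  have f: "fusion_N (Suc k) 1 k = 1" by (simp add: fusion_N_def)
  have "fusion_N (Suc k) 1 k * word_coeff (replicate k 1) k
        \<le> (\<Sum>j\<le>Suc k + 1. fusion_N (Suc k) 1 j * word_coeff (replicate k 1) j)"
    by (rule member_le_sum) auto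
  moreover have "0 < fusion_N (Suc k) 1 k * word_coeff (replicate k 1) k" using Suc f by simp
  moreover have "word_coeff (replicate (Suc k) 1) (Suc k) = (\<Sum>j\<le>Suc k + 1. fusion_N (Suc k) 1 j * word_coeff (replicate k 1) j)"
    by (simp only: replicate_Suc word_coeff.simps)
  ultimately show ?case by linarith
qed

lemma gen_1: "finite_generating {1}"
  unfolding finite_generating_def
proof (intro conjI allI)
  fix k
  show "\<exists>w. set w \<subseteq> {1} \<and> word_coeff w k \<noteq> 0"
    using word_coeff_rep[of k] by (intro exI[of _ "replicate k 1"]) auto
qed simp

lemma rho1: "rho 1 \<xi> k = (if k = 0 then \<xi> 1 else \<xi> (k-1) + \<xi> k + \<xi> (k+1))"
proof (cases k)
  case 0
  have "rho 1 \<xi> 0 = (\<Sum>n\<le>1. of_nat (fusion_N 0 n 1) * \<xi> n)" by (simp add: rho_def)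
  also have "\<dots> = \<xi> 1" by (simp add: fusion_N_def)
  finally show ?thesis using 0 by simp
next
  case (Suc j)
  have "rho 1 \<xi> k = (\<Sum>n\<in>{j, Suc j, Suc (Suc j)}. of_nat (fusion_N k n 1) * \<xi> n)"
    unfolding rho_def
    by (rule sum.mono_neutral_right) (auto simp: fusion_N_def Suc)
  also have "\<dots> = \<xi> j + \<xi> (Suc j) + \<xi> (Suc (Suc j))"
    by (simp add: fusion_N_def Suc) arith
  finally show ?thesis using Suc by simp
qed




lemma fus_01: "fusion_N k n m = 0 \<or> fusion_N k n m = 1"
  by (simp add: fusion_N_def)

lemma fus_support: "fusion_N k n m \<noteq> 0 \<Longrightarrow> n \<le> k + m \<and> k \<le> n + m"
  by (simp add: fusion_N_def split: if_splits)

lemma fus_support': "0 < fusion_N k n m \<Longrightarrow> k - m \<le> n \<and> n \<le> k + m \<and> n - m \<le> k \<and> k \<le> n + m"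
  using fus_support[of k n m] by auto

lemma fus_le1: "real (fusion_N k n m) \<le> 1"
  by (simp add: fusion_N_def)

lemma rho_sum:
  assumes "k + m < M"
  shows "rho m \<xi> k = (\<Sum>n<M. of_nat (fusion_N k n m) * \<xi> n)"
  unfolding rho_def
proof (rule sum.mono_neutral_left)
  show "\<forall>i\<in>{..<M} - {..k + m}. of_nat (fusion_N k i m) * \<xi> i = 0"
    using fus_support by fastforce
qed (use assms in auto)

lemma card_window: "card {a - m..a + m} \<le> 2*m+1"
  by simp

lemma wsum_n:
  "(\<Sum>n<M. real (fusion_N k n m)) \<le> real (2*m+1)"
proof -
  let ?W = "{..<M} \<inter> {k-m..k+m}"
  have "(\<Sum>n<M. real (fusion_N k n m)) = (\<Sum>n\<in>?W. real (fusion_N k n m))"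
    by (rule sum.mono_neutral_right) (auto dest!: fus_support')
  also have "\<dots> \<le> of_nat (card ?W) * 1"
    by (rule sum_bounded_above) (use fus_le1 in blast)
  also have "card ?W \<le> card {k-m..k+m}" by (rule card_mono) auto
  then have "real (card ?W) * 1 \<le> real (2*m+1)" using card_window[of k m] by simp
  finally show ?thesis .
qed

lemma wsum_k:
  "(\<Sum>k<K. real (fusion_N k n m)) \<le> real (2*m+1)"
proof -
  let ?W = "{..<K} \<inter> {n-m..n+m}"
  have "(\<Sum>k<K. real (fusion_N k n m)) = (\<Sum>k\<in>?W. real (fusion_N k n m))"
    by (rule sum.mono_neutral_right) (auto dest!: fus_support')
  also have "\<dots> \<le> of_nat (card ?W) * 1"
    by (rule sum_bounded_above) (use fus_le1 in blast)
  also have "card ?W \<le> card {n-m..n+m}" by (rule card_mono) auto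
  then have "real (card ?W) * 1 \<le> real (2*m+1)" using card_window[of n m] by simp
  finally show ?thesis .
qed

lemma rho_partial:
  assumes sm: "summable (\<lambda>n. (cmod (\<xi> n))\<^sup>2)"
  shows "(\<Sum>k<K. (cmod (rho m \<xi> k))\<^sup>2) \<le> real (2*m+1)^2 * (\<Sum>n. (cmod (\<xi> n))\<^sup>2)"
proof -
  define M where "M = K + m"
  define a where "a n = cmod (\<xi> n)" for n
  define w where "w k n = real (fusion_N k n m)" for k n
  have w0: "0 \<le> w k n" for k n by (simp add: w_def)
  have ww: "w k n * w k n = w k n" for k n using fus_01[of k n m] by (auto simp: w_def)
  have a0: "0 \<le> a n" for n by (simp add: a_def)
  have step: "(cmod (rho m \<xi> k))\<^sup>2 \<le> real (2*m+1) * (\<Sum>n<M. w k n * (a n)\<^sup>2)" if "k < K" for k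
  proof -
    have "rho m \<xi> k = (\<Sum>n<M. of_nat (fusion_N k n m) * \<xi> n)"
      using that by (intro rho_sum) (simp add: M_def)
    then have "cmod (rho m \<xi> k) \<le> (\<Sum>n<M. w k n * a n)"
      by (auto intro!: order.trans[OF norm_sum] simp: w_def a_def norm_mult)
    then have "(cmod (rho m \<xi> k))\<^sup>2 \<le> (\<Sum>n<M. w k n * a n)\<^sup>2"
      by (simp add: power_mono)
    also have "(\<Sum>n<M. w k n * a n) = (\<Sum>n<M. w k n * (w k n * a n))"
      by (simp add: ww mult.assoc[symmetric])
    also have "(\<dots>)\<^sup>2 \<le> (\<Sum>n<M. (w k n)\<^sup>2) * (\<Sum>n<M. (w k n * a n)\<^sup>2)"
      by (rule Cauchy_Schwarz_ineq_sum)
    also have "\<dots> = (\<Sum>n<M. w k n) * (\<Sum>n<M. w k n * (a n)\<^sup>2)"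
    proof -
      have e1: "\<And>n. (w k n)\<^sup>2 = w k n" by (simp add: power2_eq_square ww)
      have e2: "\<And>n. (w k n * a n)\<^sup>2 = w k n * (a n)\<^sup>2" using e1 by (simp add: power_mult_distrib)
      show ?thesis by (simp only: e1 e2)
    qed
    also have "\<dots> \<le> real (2*m+1) * (\<Sum>n<M. w k n * (a n)\<^sup>2)"
    proof (rule mult_right_mono)
      show "(\<Sum>n<M. w k n) \<le> real (2*m+1)" using wsum_n[where M=M and k=k and m=m] by (simp add: w_def)
      show "0 \<le> (\<Sum>n<M. w k n * (a n)\<^sup>2)" by (intro sum_nonneg) (simp add: w_def)
    qed
    finally show ?thesis .
  qed
  have "(\<Sum>k<K. (cmod (rho m \<xi> k))\<^sup>2) \<le> (\<Sum>k<K. real (2*m+1) * (\<Sum>n<M. w k n * (a n)\<^sup>2))"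
    by (rule sum_mono) (rule step, simp)
  also have "\<dots> = real (2*m+1) * (\<Sum>k<K. \<Sum>n<M. w k n * (a n)\<^sup>2)"
    by (simp add: sum_distrib_left)
  also have "(\<Sum>k<K. \<Sum>n<M. w k n * (a n)\<^sup>2) = (\<Sum>n<M. \<Sum>k<K. w k n * (a n)\<^sup>2)"
    by (rule sum.swap)
  also have "\<dots> = (\<Sum>n<M. (a n)\<^sup>2 * (\<Sum>k<K. w k n))"
    by (rule sum.cong[OF refl]) (simp add: sum_distrib_left mult.commute)
  also have "real (2*m+1) * (\<Sum>n<M. (a n)\<^sup>2 * (\<Sum>k<K. w k n)) \<le> real (2*m+1) * (\<Sum>n<M. (a n)\<^sup>2 * real (2*m+1))"
  proof (rule mult_left_mono)
    show "(\<Sum>n<M. (a n)\<^sup>2 * (\<Sum>k<K. w k n)) \<le> (\<Sum>n<M. (a n)\<^sup>2 * real (2*m+1))"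
    proof (rule sum_mono)
      fix n
      show "(a n)\<^sup>2 * (\<Sum>k<K. w k n) \<le> (a n)\<^sup>2 * real (2*m+1)"
        using wsum_k[where K=K and n=n and m=m] by (intro mult_left_mono) (simp_all add: w_def)
    qed
  qed simp
  also have "\<dots> = real (2*m+1)^2 * (\<Sum>n<M. (a n)\<^sup>2)"
    by (simp add: sum_distrib_right[symmetric] power2_eq_square)
  also have "\<dots> \<le> real (2*m+1)^2 * (\<Sum>n. (cmod (\<xi> n))\<^sup>2)"
  proof (rule mult_left_mono)
    show "(\<Sum>n<M. (a n)\<^sup>2) \<le> (\<Sum>n. (cmod (\<xi> n))\<^sup>2)"
      unfolding a_def by (rule sum_le_suminf[OF sm]) auto
  qed simp
  finally show ?thesis .
qed

lemma rho_l2: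
  assumes sm: "summable (\<lambda>n. (cmod (\<xi> n))\<^sup>2)"
  shows "summable (\<lambda>k. (cmod (rho m \<xi> k))\<^sup>2)"
    and "(\<Sum>k. (cmod (rho m \<xi> k))\<^sup>2) \<le> real (2*m+1)^2 * (\<Sum>n. (cmod (\<xi> n))\<^sup>2)"
proof -
  show s: "summable (\<lambda>k. (cmod (rho m \<xi> k))\<^sup>2)"
    by (rule summableI_nonneg_bounded[OF _ rho_partial[OF sm]]) simp
  show "(\<Sum>k. (cmod (rho m \<xi> k))\<^sup>2) \<le> real (2*m+1)^2 * (\<Sum>n. (cmod (\<xi> n))\<^sup>2)"
    using suminf_le_const[OF s] rho_partial[OF sm] by blast
qed




lemma L2_le_suminf:
  assumes "summable (\<lambda>n. (f n)\<^sup>2)"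
  shows "L2_set f {..<K} \<le> sqrt (\<Sum>n. (f n :: real)\<^sup>2)"
  unfolding L2_set_def
  by (intro real_sqrt_le_mono sum_le_suminf assms) auto

lemma lower:
  assumes xi: "\<xi> \<in> l2" "l2norm \<xi> = 1" and D: "0 \<le> D"
  shows "D - real (2*m+1) \<le> l2norm (\<lambda>k. rho m \<xi> k - of_real D * \<xi> k)"
proof -
  define a where "a n = cmod (\<xi> n)" for n
  define r where "r n = cmod (rho m \<xi> n)" for n
  define \<eta> where "\<eta> k = rho m \<xi> k - of_real D * \<xi> k" for k
  define e where "e n = cmod (\<eta> n)" for n
  have sa: "summable (\<lambda>n. (a n)\<^sup>2)" using xi(1) by (simp add: l2_def a_def)
  have S0: "0 \<le> (\<Sum>n. (a n)\<^sup>2)" by (intro suminf_nonneg sa) simp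
  have S1: "(\<Sum>n. (a n)\<^sup>2) = 1"
    using xi(2) S0 unfolding l2norm_def a_def by simp
  have sr: "summable (\<lambda>n. (r n)\<^sup>2)" using rho_l2(1)[of \<xi> m] sa by (simp add: r_def a_def)
  have Sr: "(\<Sum>n. (r n)\<^sup>2) \<le> real (2*m+1)^2"
    using rho_l2(2)[of \<xi> m] sa S1 by (simp add: r_def a_def)
  have ek: "e k \<le> r k + D * a k" for k
  proof -
    have "e k \<le> cmod (rho m \<xi> k) + cmod (of_real D * \<xi> k)"
      unfolding e_def \<eta>_def by (rule norm_triangle_ineq4)
    then show ?thesis using D by (simp add: r_def a_def norm_mult)
  qed
  have ek2: "norm ((e k)\<^sup>2) \<le> 2 * (r k)\<^sup>2 + 2 * D\<^sup>2 * (a k)\<^sup>2" for k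
  proof -
    have e0: "0 \<le> e k" by (simp add: e_def)
    have "(e k)\<^sup>2 \<le> (r k + D * a k)\<^sup>2" using ek[of k] e0 by (simp add: power_mono)
    also have "\<dots> \<le> 2 * (r k)\<^sup>2 + 2 * D\<^sup>2 * (a k)\<^sup>2"
      using sum_squares_bound[of "r k" "D * a k"] 
      by (simp add: power2_eq_square algebra_simps)
    finally show ?thesis by simp
  qed
  have se: "summable (\<lambda>n. (e n)\<^sup>2)"
    by (rule summable_comparison_test[of _ "\<lambda>k. 2 * (r k)\<^sup>2 + 2 * D\<^sup>2 * (a k)\<^sup>2"])
       (use ek2 sr sa in \<open>auto intro!: summable_add summable_mult\<close>)
  have main: "D * L2_set a {..<K} \<le> l2norm \<eta> + real (2*m+1)" for K
  proof -
    have "D * L2_set a {..<K} = L2_set (\<lambda>k. D * a k) {..<K}"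
      using D by (rule L2_set_right_distrib)
    also have "\<dots> \<le> L2_set (\<lambda>k. e k + r k) {..<K}"
    proof (rule L2_set_mono)
      fix k
      have "cmod (of_real D * \<xi> k) \<le> cmod (\<eta> k) + cmod (rho m \<xi> k)"
        using norm_triangle_ineq4[of "rho m \<xi> k" "\<eta> k"] unfolding \<eta>_def
        by (simp add: norm_minus_commute)
      then show "D * a k \<le> e k + r k" using D by (simp add: a_def e_def r_def norm_mult)
      show "0 \<le> D * a k" using D by (simp add: a_def)
    qed
    also have "\<dots> \<le> L2_set e {..<K} + L2_set r {..<K}" by (rule L2_set_triangle_ineq)
    also have "\<dots> \<le> l2norm \<eta> + sqrt (real (2*m+1)^2)"
      using L2_le_suminf[OF se, of K] L2_le_suminf[OF sr, of K] Sr
      unfolding l2norm_def e_def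
      by (smt (verit) real_sqrt_le_mono)
    finally show ?thesis by simp
  qed
  have lim: "(\<lambda>K. D * L2_set a {..<K}) \<longlonglongrightarrow> D * 1"
  proof (intro tendsto_mult_left)
    have "(\<lambda>K. sqrt (\<Sum>n<K. (a n)\<^sup>2)) \<longlonglongrightarrow> sqrt (\<Sum>n. (a n)\<^sup>2)"
      by (intro tendsto_real_sqrt summable_LIMSEQ sa)
    then show "(\<lambda>K. L2_set a {..<K}) \<longlonglongrightarrow> 1" using S1 by (simp add: L2_set_def)
  qed
  have "D * 1 \<le> l2norm \<eta> + real (2*m+1)"
    by (rule LIMSEQ_le_const2[OF lim]) (use main in auto)
  then show ?thesis unfolding \<eta>_def by simp
qed




lemma upper_vec:
  fixes d c :: real and M :: nat and \<xi> :: "nat \<Rightarrow> complex"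
  assumes d3: "3 \<le> d"
  and c_def: "c = 1 / sqrt (real M + 2)"
  and \<xi>_def: "\<xi> = (\<lambda>k. complex_of_real (if k \<le> Suc M then c else 0))"
  shows "\<xi> \<in> l2" "l2norm \<xi> = 1"
    "l2norm (\<lambda>k. rho 1 \<xi> k - of_real d * \<xi> k) = sqrt ((d - 3)\<^sup>2 + (6*d - 12) / (real M + 2))"
proof -
  have c2: "c\<^sup>2 = 1 / (real M + 2)" unfolding c_def by (simp add: power_divide)
  have fin1: "(\<lambda>k. (cmod (\<xi> k))\<^sup>2) k = 0" if "k \<notin> {..<Suc (Suc M)}" for k
    using that by (simp add: \<xi>_def)
  have "summable (\<lambda>k. (cmod (\<xi> k))\<^sup>2)"
    by (rule summable_finite[of "{..<Suc (Suc M)}"]) (use fin1 in auto)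
  then show "\<xi> \<in> l2" unfolding l2_def by simp
  have "(\<Sum>k. (cmod (\<xi> k))\<^sup>2) = (\<Sum>k<Suc (Suc M). (cmod (\<xi> k))\<^sup>2)"
    by (rule suminf_finite) (use fin1 in auto)
  also have "\<dots> = (\<Sum>k<Suc (Suc M). c\<^sup>2)"
    by (rule sum.cong) (auto simp: \<xi>_def)
  also have "\<dots> = 1" using c2 by simp
  finally show "l2norm \<xi> = 1" by (simp add: l2norm_def)
  define g where "g k = (if k = 0 then 1 - d else if k \<le> M then 3 - d else if k = Suc M then 2 - d
      else if k = Suc (Suc M) then 1 else 0)" for k
  have eta: "rho 1 \<xi> k - of_real d * \<xi> k = complex_of_real (c * g k)" for k
  proof -
    have r: "rho 1 \<xi> k = (if k = 0 then \<xi> 1 else \<xi> (k-1) + \<xi> k + \<xi> (k+1))" by (rule rho1)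
    consider "k = 0" | "0 < k" "k \<le> M" | "k = Suc M" | "k = Suc (Suc M)" | "Suc (Suc M) < k"
      by linarith
    then show ?thesis
    proof cases
      case 1 then show ?thesis unfolding r by (simp add: \<xi>_def g_def algebra_simps)
    next
      case 2 then show ?thesis unfolding r by (simp add: \<xi>_def g_def algebra_simps)
    next
      case 3 then show ?thesis unfolding r by (simp add: \<xi>_def g_def algebra_simps)
    next
      case 4 then show ?thesis unfolding r by (simp add: \<xi>_def g_def algebra_simps)
    next
      case 5 then show ?thesis unfolding r by (simp add: \<xi>_def g_def algebra_simps)
    qed
  qed
  have fin2: "(cmod (rho 1 \<xi> k - of_real d * \<xi> k))\<^sup>2 = 0" if "k \<notin> {..<Suc (Suc (Suc M))}" for k
    using that unfolding eta by (simp add: g_def)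
  have "(\<Sum>k. (cmod (rho 1 \<xi> k - of_real d * \<xi> k))\<^sup>2)
      = (\<Sum>k<Suc (Suc (Suc M)). (cmod (rho 1 \<xi> k - of_real d * \<xi> k))\<^sup>2)"
    by (rule suminf_finite) (use fin2 in auto)
  also have "\<dots> = (\<Sum>k<Suc (Suc (Suc M)). c\<^sup>2 * (g k)\<^sup>2)"
    proof -
    have cm: "\<And>x. (cmod (complex_of_real x))\<^sup>2 = x\<^sup>2" by simp
    show ?thesis unfolding eta cm power_mult_distrib ..
  qed
  also have "\<dots> = c\<^sup>2 * (\<Sum>k<Suc (Suc (Suc M)). (g k)\<^sup>2)"
    by (rule sum_distrib_left[symmetric])
  also have "(\<Sum>k<Suc (Suc (Suc M)). (g k)\<^sup>2) = (1-d)\<^sup>2 + real M * (3-d)\<^sup>2 + (2-d)\<^sup>2 + 1"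
  proof -
    have "(\<Sum>k<Suc M. (g k)\<^sup>2) = (g 0)\<^sup>2 + (\<Sum>k<M. (g (Suc k))\<^sup>2)"
      by (rule sum.lessThan_Suc_shift)
    also have "(\<Sum>k<M. (g (Suc k))\<^sup>2) = (\<Sum>k<M. (3-d)\<^sup>2)"
      by (rule sum.cong) (auto simp: g_def)
    finally have "(\<Sum>k<Suc M. (g k)\<^sup>2) = (1-d)\<^sup>2 + real M * (3-d)\<^sup>2" by (simp add: g_def)
    then show ?thesis by (simp add: g_def)
  qed
  also have "c\<^sup>2 * ((1-d)\<^sup>2 + real M * (3-d)\<^sup>2 + (2-d)\<^sup>2 + 1) = (d - 3)\<^sup>2 + (6*d - 12) / (real M + 2)"
    unfolding c2 by (simp add: field_simps power2_eq_square)
  finally show "l2norm (\<lambda>k. rho 1 \<xi> k - of_real d * \<xi> k) = sqrt ((d - 3)\<^sup>2 + (6*d - 12) / (real M + 2))"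
    by (simp add: l2norm_def)
qed




lemma d1_ge3: assumes "0 < q" shows "3 \<le> dimq q 1"
proof -
  have "0 \<le> (q - inverse q)^2" by simp
  then have "0 \<le> q^2 + inverse q^2 - 2 * (q * inverse q)" by (simp add: power2_diff)
  then show ?thesis using assms dimq_1[OF assms] by simp
qed

lemma dimq_pos: assumes "0 < q" "q \<le> 1" shows "0 < dimq q m"
proof -
  have "0 \<le> real m * (q^2 + inverse q ^ 2)" by simp
  then show ?thesis using dimq_ge[OF assms, of m] by linarith
qed

lemma U_ne: "\<exists>\<xi>. \<xi> \<in> l2 \<and> l2norm \<xi> = 1"
  using upper_vec(1,2)[of 3 "1 / sqrt (real 0 + 2)" 0, OF _ refl refl] by auto

lemma KazX_lower:
  assumes q: "0 < q" "q \<le> 1" and X: "finite_generating X"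
  shows "1 - 3 / dimq q 1 \<le> Kaz_X q X"
  unfolding Kaz_X_def
proof (rule cINF_greatest)
  show "{\<xi> \<in> l2. l2norm \<xi> = 1} \<noteq> {}" using U_ne by blast
  fix \<xi> assume "\<xi> \<in> {\<xi> \<in> l2. l2norm \<xi> = 1}"
  then have xi: "\<xi> \<in> l2" "l2norm \<xi> = 1" by auto
  obtain m where m: "m \<in> X" "1 \<le> m" using gen_has_pos[OF X] by blast
  have fin: "finite X" using X by (simp add: finite_generating_def)
  define F where "F m = l2norm (\<lambda>k. rho m \<xi> k - complex_of_real (dimq q m) * \<xi> k) / dimq q m" for m
  have Dp: "0 < dimq q m" by (rule dimq_pos[OF q])
  have "dimq q m - real (2*m+1) \<le> l2norm (\<lambda>k. rho m \<xi> k - complex_of_real (dimq q m) * \<xi> k)"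
    using lower[OF xi, of "dimq q m" m] Dp by simp
  then have "(dimq q m - real (2*m+1)) / dimq q m \<le> F m" unfolding F_def
    by (rule divide_right_mono) (use Dp in simp)
  moreover have "(dimq q m - real (2*m+1)) / dimq q m = 1 - real (2*m+1) / dimq q m"
    using Dp by (simp add: diff_divide_distrib)
  ultimately have "1 - real (2*m+1) / dimq q m \<le> F m" by simp
  then have "1 - 3 / dimq q 1 \<le> F m" using dimq_ratio[OF q m(2)] by linarith
  also have "F m \<le> Max (F ` X)" using fin m(1) by simp
  finally show "1 - 3 / dimq q 1 \<le> Max (F ` X)" .
qed

lemma KazX_1:
  assumes q: "0 < q" "q \<le> 1"
  shows "Kaz_X q {1} \<le> 1 - 3 / dimq q 1"
proof (rule field_le_epsilon)
  fix \<epsilon> :: real assume e: "0 < \<epsilon>"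
  define d where "d = dimq q 1"
  have d3: "3 \<le> d" using d1_ge3[OF q(1)] by (simp add: d_def)
  obtain M :: nat where M: "(6*d - 12) / (\<epsilon>*d)\<^sup>2 < real M" using reals_Archimedean2 by blast
  define c where "c = 1 / sqrt (real M + 2)"
  define \<xi> where "\<xi> = (\<lambda>k. complex_of_real (if k \<le> Suc M then c else 0))"
  note uv = upper_vec[OF d3 c_def \<xi>_def]
  have edp: "0 < (\<epsilon>*d)\<^sup>2" using e d3 by simp
  have "(6*d - 12) < real M * (\<epsilon>*d)\<^sup>2" using M edp by (simp add: field_simps)
  also have "\<dots> \<le> (real M + 2) * (\<epsilon>*d)\<^sup>2" using edp by (simp add: field_simps)
  finally have "(6*d - 12) / (real M + 2) \<le> (\<epsilon>*d)\<^sup>2" by (simp add: field_simps)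
  moreover have "0 \<le> 2 * (d - 3) * (\<epsilon> * d)" using e d3 by simp
  ultimately have "(d - 3)\<^sup>2 + (6*d - 12) / (real M + 2) \<le> (d - 3 + \<epsilon> * d)\<^sup>2"
    by (simp add: power2_sum)
  then have "sqrt ((d - 3)\<^sup>2 + (6*d - 12) / (real M + 2)) \<le> sqrt ((d - 3 + \<epsilon> * d)\<^sup>2)"
    by (rule real_sqrt_le_mono)
  also have "sqrt ((d - 3 + \<epsilon> * d)\<^sup>2) = d - 3 + \<epsilon> * d" using e d3 by simp
  finally have "sqrt ((d - 3)\<^sup>2 + (6*d - 12) / (real M + 2)) \<le> d - 3 + \<epsilon> * d" .
  then have nrm: "l2norm (\<lambda>k. rho 1 \<xi> k - of_real d * \<xi> k) \<le> d - 3 + \<epsilon> * d"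
    unfolding uv(3) .
  have "l2norm (\<lambda>k. rho 1 \<xi> k - of_real d * \<xi> k) / d \<le> (d - 3 + \<epsilon> * d) / d"
    by (rule divide_right_mono[OF nrm]) (use d3 in simp)
  also have "(d - 3 + \<epsilon> * d) / d = 1 - 3 / d + \<epsilon>" using d3 by (simp add: field_simps)
  finally have val: "l2norm (\<lambda>k. rho 1 \<xi> k - of_real d * \<xi> k) / d \<le> 1 - 3 / d + \<epsilon>" .
  have bdd: "bdd_below ((\<lambda>\<xi>. Max ((\<lambda>m. l2norm (\<lambda>k. rho m \<xi> k - of_real (dimq q m) * \<xi> k) / dimq q m) ` {1}))
      ` {\<xi> \<in> l2. l2norm \<xi> = 1})"
  proof (rule bdd_belowI[of _ 0])
    fix x assume "x \<in> (\<lambda>\<xi>. Max ((\<lambda>m. l2norm (\<lambda>k. rho m \<xi> k - of_real (dimq q m) * \<xi> k) / dimq q m) ` {1}))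
      ` {\<xi> \<in> l2. l2norm \<xi> = 1}"
    then obtain \<zeta> where z: "\<zeta> \<in> l2" "l2norm \<zeta> = 1"
      and x: "x = l2norm (\<lambda>k. rho 1 \<zeta> k - of_real (dimq q 1) * \<zeta> k) / dimq q 1" by auto
    have "dimq q 1 - real (2*1+1) \<le> l2norm (\<lambda>k. rho 1 \<zeta> k - of_real (dimq q 1) * \<zeta> k)"
      by (rule lower[OF z]) (use d1_ge3[OF q(1)] in simp)
    then have "0 \<le> l2norm (\<lambda>k. rho 1 \<zeta> k - of_real (dimq q 1) * \<zeta> k)"
      using d1_ge3[OF q(1)] by simp
    then show "0 \<le> x" unfolding x using d1_ge3[OF q(1)] by simp
  qed
  show "Kaz_X q {1} \<le> 1 - 3 / dimq q 1 + \<epsilon>"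
    unfolding Kaz_X_def
    by (rule cINF_lower2[OF bdd, of \<xi>]) (use uv(1,2) val in \<open>auto simp: d_def\<close>)
qed

theorem proposition5p5:
  fixes q :: real
  assumes "0 < q" and "q \<le> 1"
  shows "Kaz_rho q = 1 - 3 / qnum q 3
    \<and> 1 - 3 / qnum q 3 = 1 - 3 / (q\<^sup>2 + inverse (q\<^sup>2) + 1)"
proof -
  have qd: "qnum q 3 = dimq q 1" by (simp add: dimq_def)
  have bdd: "bdd_below (Kaz_X q ` {X. finite_generating X})"
    by (rule bdd_belowI[of _ "1 - 3 / dimq q 1"]) (use KazX_lower[OF assms] in auto)
  have "Kaz_rho q \<le> Kaz_X q {1}"
    unfolding Kaz_rho_def by (rule cINF_lower[OF bdd]) (rule CollectI, rule gen_1)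
  also have "\<dots> \<le> 1 - 3 / dimq q 1" by (rule KazX_1[OF assms])
  finally have le: "Kaz_rho q \<le> 1 - 3 / dimq q 1" .
  have ge: "1 - 3 / dimq q 1 \<le> Kaz_rho q"
    unfolding Kaz_rho_def
    by (rule cINF_greatest) (use gen_1 KazX_lower[OF assms] in auto)
  have "dimq q 1 = q\<^sup>2 + inverse (q\<^sup>2) + 1"
    using dimq_1[OF assms(1)] by (simp add: power_inverse)
  then show ?thesis using le ge qd by simp
qed


end
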